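(* There is a constant $C$ such that for every $T\ge2$ there is an online forecasting algorithm which, against every (possibly adaptive) sequence of outcomes $b_1,\dots,b_T\in\{0,1\}$, guarantees $\mathrm{Cal}(\mathbf x_{1:T},\mathbf b_{1:T})\le C\,T^{1/3}\log T$.
   Context: Online calibration: in each round $t$ the forecaster, knowing $b_1,\dots,b_{t-1}$, outputs a finitely supported distribution $\mathbf x_t\in\Delta([0,1])$ over predictions; then the adversary, knowing $\mathbf x_1,\dots,\mathbf x_t$, chooses $b_t\in\{0,1\}$. Writing $\mathbf x_t[p]$ for the probability that $\mathbf x_t$ assigns to $p$, $W_p=\sum_t\mathbf x_t[p]$ and $B_p=\sum_t b_t\mathbf x_t[p]$, the $\ell_2$-calibration error is $$\mathrm{Cal}(\mathbf x_{1:T},\mathbf b_{1:T})=\sum_{p\in[0,1]:\,W_p>0}W_p\Big(p-\frac{B_p}{W_p}\Big)^2 .$$ *)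

theory Defs
  imports "HOL-Probability.Probability_Mass_Function"
begin

text \<open>A forecaster maps the history of outcomes b_1..b_(t-1) to a distribution
  over predictions. An (adaptive) adversary maps the forecasts x_1..x_t to the
  outcome b_t (True = 1, False = 0).\<close>

type_synonym forecaster = "bool list \<Rightarrow> real pmf"
type_synonym adversary = "real pmf list \<Rightarrow> bool"

definition valid_forecaster :: "forecaster \<Rightarrow> bool" where
  "valid_forecaster F \<longleftrightarrow>
     (\<forall>bs. finite (set_pmf (F bs)) \<and> set_pmf (F bs) \<subseteq> {0..1})"

fun run :: "forecaster \<Rightarrow> adversary \<Rightarrow> nat \<Rightarrow> real pmf list \<times> bool list" where
  "run F A 0 = ([], [])"
| "run F A (Suc n) =
     (let (xs, bs) = run F A n;
          xs' = xs @ [F bs]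
      in (xs', bs @ [A xs']))"

definition Wt :: "real pmf list \<Rightarrow> real \<Rightarrow> real" where
  "Wt xs p = (\<Sum>t<length xs. pmf (xs ! t) p)"

definition Bt :: "real pmf list \<Rightarrow> bool list \<Rightarrow> real \<Rightarrow> real" where
  "Bt xs bs p = (\<Sum>t<length xs. of_bool (bs ! t) * pmf (xs ! t) p)"

definition cal :: "real pmf list \<Rightarrow> bool list \<Rightarrow> real" where
  "cal xs bs = (\<Sum>p \<in> {p \<in> {0..1}. Wt xs p > 0}.
                  Wt xs p * (p - Bt xs bs p / Wt xs p)\<^sup>2)"

end

theory Submission
  imports Defs
begin

lemma hedge:
  fixes p h mu mu' bb :: real
  assumes h: "h > 0" and d0: "p - mu < 0" and d1: "p + h - mu' \<ge> 0"
  defines "q \<equiv> (p + h - mu') / ((p + h - mu') - (p - mu))"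
  shows "q * (p - bb)\<^sup>2 + (1 - q) * (p + h - bb)\<^sup>2
         \<le> q * (mu - bb)\<^sup>2 + (1 - q) * (mu' - bb)\<^sup>2 + h\<^sup>2 / 4"
proof -
  define d where "d = p - mu"
  define d' where "d' = p + h - mu'"
  define s where "s = d' - d"
  have s: "s > 0" using d0 d1 by (simp add: s_def d_def d'_def)
  define a where "a = d' * (- d) / s"
  have q: "q = d' / s" by (simp add: q_def s_def d_def d'_def)
  have qd: "q * d = - a" using s by (simp add: q a_def field_simps)
  have q1: "(1 - q) * d' = a" using s by (simp add: q a_def s_def field_simps)
  have "q * (p - bb)\<^sup>2 + (1 - q) * (p + h - bb)\<^sup>2 - (q * (mu - bb)\<^sup>2 + (1 - q) * (mu' - bb)\<^sup>2)
      = (q * d) * (2*p - d - 2*bb) + ((1 - q) * d') * (2*p + 2*h - d' - 2*bb)"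
    by (simp add: d_def d'_def power2_eq_square algebra_simps)
  also have "\<dots> = a * (2*h - s)" unfolding qd q1 by (simp add: s_def algebra_simps)
  also have "\<dots> \<le> h\<^sup>2/4"
  proof -
    have a0: "a \<ge> 0" using s d0 d1 by (simp add: a_def d_def d'_def)
    have as: "4 * a \<le> s"
    proof -
      have e: "s * s - 4 * (d' * (-d)) = (d' + d)\<^sup>2" unfolding s_def power2_eq_square by algebra
      have "4 * (d' * (-d)) \<le> s * s" using e zero_le_power2[of "d' + d"] by linarith
      thus ?thesis using s by (simp add: a_def field_simps)
    qed
    show ?thesis
    proof (cases "2*h - s \<le> 0")
      case True
      have "a * (2*h - s) \<le> 0" using a0 True by (simp add: mult_nonneg_nonpos)
      moreover have "0 \<le> h\<^sup>2/4" by simp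
      ultimately show ?thesis by linarith
    next
      case False
      have "4 * (a * (2*h - s)) \<le> s * (2*h - s)"
        using mult_right_mono[OF as, of "2*h - s"] False by (simp add: mult.assoc)
      also have "\<dots> \<le> h\<^sup>2"
      proof -
        have e: "h\<^sup>2 - s * (2*h - s) = (s - h)\<^sup>2" unfolding power2_eq_square by algebra
        show ?thesis using e zero_le_power2[of "s - h"] by linarith
      qed
      finally show ?thesis by simp
    qed
  qed
  finally show ?thesis by simp
qed

definition V :: "real \<Rightarrow> real \<Rightarrow> real" where
  "V W B = B + 1/4 - (B + 1/2)\<^sup>2 / (W + 1)"

lemma V_identity_aux:
  fixes A M w bb :: real
  assumes "A > 0" "A + w > 0" "bb = 0 \<or> bb = 1"
  shows "bb * w - (M + bb * w)\<^sup>2 / (A + w) + M\<^sup>2 / A = w * A / (A + w) * (M / A - bb)\<^sup>2"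
proof -
  have n: "A \<noteq> 0" "A + w \<noteq> 0" using assms by auto
  have e1: "A * A + A * w = A * (A + w)" by (simp add: algebra_simps)
  have e2: "A * (A * A) + A * (A * w) = A * (A * (A + w))" by (simp add: algebra_simps)
  have n2: "A * A + A * w \<noteq> 0" "A * (A * A) + A * (A * w) \<noteq> 0" "A * (A + w) \<noteq> 0"
    unfolding e1 e2 using n by auto
  from assms(3) show ?thesis
  proof
    assume b: "bb = 0"
    show ?thesis unfolding b using n n2 by (simp add: field_simps power2_eq_square)
  next
    assume b: "bb = 1"
    show ?thesis unfolding b using n n2 by (simp add: field_simps power2_eq_square)
  qed
qed

lemma V_identity:
  fixes W B w bb :: real
  assumes "W \<ge> 0" "w \<ge> 0" "bb = 0 \<or> bb = 1"
  shows "V (W + w) (B + bb * w) - V W B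
       = w * (W + 1) / (W + 1 + w) * ((B + 1/2) / (W + 1) - bb)\<^sup>2"
proof -
  have A: "W + 1 > 0" "W + 1 + w > 0" using assms by auto
  have "V (W + w) (B + bb * w) - V W B
      = bb * w - ((B + 1/2) + bb * w)\<^sup>2 / ((W + 1) + w) + (B + 1/2)\<^sup>2 / (W + 1)"
    unfolding V_def by (simp add: add_ac)
  also have "\<dots> = w * (W + 1) / (W + 1 + w) * ((B + 1/2) / (W + 1) - bb)\<^sup>2"
    by (rule V_identity_aux[OF A assms(3)])
  finally show ?thesis .
qed

lemma ftrl_step:
  fixes W B w bb :: real
  assumes W: "W \<ge> 0" and B: "0 \<le> B" "B \<le> W" and w: "0 \<le> w" "w \<le> 1"
    and bb: "bb = 0 \<or> bb = 1"
  shows "w * ((B + 1/2) / (W + 1) - bb)\<^sup>2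
     \<le> V (W + w) (B + bb * w) - V W B + ln (1 + (W + w)) - ln (1 + W)"
proof -
  define mu where "mu = (B + 1/2) / (W + 1)"
  define A where "A = W + 1"
  have A: "A > 0" "A + w > 0" using W w by (auto simp: A_def)
  have bbb: "bb * bb = bb" using bb by auto
  have id: "V (W + w) (B + bb * w) - V W B = w * A / (A + w) * (mu - bb)\<^sup>2"
    using V_identity[OF W w(1) bb] by (simp add: A_def mu_def add_ac)
  have mu: "0 < mu" "mu < 1" using W B by (auto simp: mu_def field_simps)
  have m1: "(mu - bb)\<^sup>2 \<le> 1"
  proof -
    have "\<bar>mu - bb\<bar> \<le> 1" using bb mu by auto
    hence "\<bar>mu - bb\<bar>\<^sup>2 \<le> 1\<^sup>2" by (intro power_mono) auto
    thus ?thesis by simp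
  qed
  have "w * (mu - bb)\<^sup>2 - w * A / (A + w) * (mu - bb)\<^sup>2 = (w * w / (A + w)) * (mu - bb)\<^sup>2"
    using A by (simp add: field_simps)
  also have "\<dots> \<le> w * w / (A + w)"
    using m1 A w by (intro mult_left_le) auto
  also have "\<dots> \<le> w / (A + w)"
    using A w by (intro divide_right_mono) (auto intro: mult_left_le)
  also have "\<dots> \<le> ln (A + w) - ln A"
  proof -
    have "ln (A / (A + w)) \<le> A / (A + w) - 1" using A by (intro ln_le_minus_one) auto
    also have "A / (A + w) - 1 = - (w / (A + w))" using A by (simp add: field_simps)
    finally show ?thesis using A by (simp add: ln_div)
  qed
  finally show ?thesis using id by (simp add: mu_def A_def add_ac)
qed

lemma V_le:
  fixes W B :: real
  assumes "W > 0" "0 \<le> B" "B \<le> W"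
  shows "V W B \<le> 1/4 + B - B\<^sup>2 / W"
proof -
  have gen: "V W B \<le> (W + 1) * y\<^sup>2 - 2 * (B + 1/2) * y + B + 1/4" for y
  proof -
    have A: "W + 1 > 0" using assms by auto
    have aux: "A * y\<^sup>2 - 2 * M * y + M\<^sup>2 / A = (A * y - M)\<^sup>2 / A" if "A \<noteq> 0" for A M :: real
      using that by (simp add: field_simps power2_eq_square)
    have "(W + 1) * y\<^sup>2 - 2 * (B + 1/2) * y + B + 1/4 - V W B
        = (W + 1) * y\<^sup>2 - 2 * (B + 1/2) * y + (B + 1/2)\<^sup>2 / (W + 1)"
      unfolding V_def by simp
    also have "\<dots> = ((W + 1) * y - (B + 1/2))\<^sup>2 / (W + 1)"
      using A by (intro aux) simp
    also have "\<dots> \<ge> 0" using A by simp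
    finally show ?thesis by simp
  qed
  define r where "r = B / W"
  have r: "0 \<le> r" "r \<le> 1" using assms by (auto simp: r_def field_simps)
  have "(W + 1) * r\<^sup>2 - 2 * (B + 1/2) * r + B + 1/4 = B - B\<^sup>2 / W + (r * r - r + 1/4)"
    using assms by (simp add: r_def field_simps power2_eq_square)
  also have "\<dots> \<le> B - B\<^sup>2 / W + 1/4"
    using r mult_left_le[of r r] by simp
  finally show ?thesis using gen[of r] by simp
qed

lemma V_00: "V 0 0 = 0" by (simp add: V_def power2_eq_square)

definition g :: "nat \<Rightarrow> nat \<Rightarrow> real" where "g m i = real i / real m"

type_synonym state = "(nat \<Rightarrow> real) \<times> (nat \<Rightarrow> real)"

definition mu :: "state \<Rightarrow> nat \<Rightarrow> real" where
  "mu s i = (snd s i + 1/2) / (fst s i + 1)"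
definition dd :: "nat \<Rightarrow> state \<Rightarrow> nat \<Rightarrow> real" where
  "dd m s i = g m i - mu s i"
definition kk :: "nat \<Rightarrow> state \<Rightarrow> nat" where
  "kk m s = (LEAST k. 0 \<le> dd m s (Suc k))"
definition qq :: "nat \<Rightarrow> state \<Rightarrow> real" where
  "qq m s = dd m s (Suc (kk m s)) / (dd m s (Suc (kk m s)) - dd m s (kk m s))"
definition wt :: "nat \<Rightarrow> state \<Rightarrow> nat \<Rightarrow> real" where
  "wt m s i = (if i = kk m s then qq m s else if i = Suc (kk m s) then 1 - qq m s else 0)"
definition stepf :: "nat \<Rightarrow> state \<Rightarrow> bool \<Rightarrow> state" where
  "stepf m s b = (\<lambda>i. fst s i + wt m s i, \<lambda>i. snd s i + of_bool b * wt m s i)"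
definition st :: "nat \<Rightarrow> bool list \<Rightarrow> state" where
  "st m bs = foldl (stepf m) (\<lambda>_. 0, \<lambda>_. 0) bs"
definition FF :: "nat \<Rightarrow> bool list \<Rightarrow> real pmf" where
  "FF m bs = map_pmf (\<lambda>c. if c then g m (kk m (st m bs)) else g m (Suc (kk m (st m bs))))
                      (bernoulli_pmf (qq m (st m bs)))"

definition good :: "state \<Rightarrow> bool" where
  "good s \<longleftrightarrow> (\<forall>i. 0 \<le> snd s i \<and> snd s i \<le> fst s i)"

lemma mu_bounds: assumes "good s" shows "0 < mu s i \<and> mu s i < 1"
proof -
  have a: "0 \<le> snd s i" "snd s i \<le> fst s i" using assms by (auto simp: good_def)
  have p: "0 < fst s i + 1" "0 < snd s i + 1/2" using a by linarith+
  have "snd s i + 1/2 < fst s i + 1" using a by linarith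
  thus ?thesis using p unfolding mu_def by simp
qed

lemma kk_props:
  assumes m: "m \<ge> 1" and gd: "good s"
  shows "kk m s < m" "dd m s (kk m s) < 0" "0 \<le> dd m s (Suc (kk m s))"
proof -
  have gm: "g m m = 1" using m by (simp add: g_def)
  have ex: "0 \<le> dd m s (Suc (m - 1))"
    using m mu_bounds[OF gd, of m] by (simp add: dd_def gm)
  show c3: "0 \<le> dd m s (Suc (kk m s))" unfolding kk_def by (rule LeastI[where P="\<lambda>k. 0 \<le> dd m s (Suc k)", OF ex])
  have "kk m s \<le> m - 1" unfolding kk_def by (rule Least_le[where P="\<lambda>k. 0 \<le> dd m s (Suc k)", OF ex])
  thus "kk m s < m" using m by simp
  show "dd m s (kk m s) < 0"
  proof (cases "kk m s")
    case 0 thus ?thesis using mu_bounds[OF gd, of 0] by (simp add: dd_def g_def)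
  next
    case (Suc j)
    have "j < kk m s" using Suc by simp
    hence "\<not> 0 \<le> dd m s (Suc j)" unfolding kk_def by (rule not_less_Least)
    thus ?thesis using Suc by simp
  qed
qed

lemma qq_props:
  assumes m: "m \<ge> 1" and gd: "good s"
  shows "0 \<le> qq m s" "qq m s \<le> 1"
  using kk_props[OF m gd] unfolding qq_def by (auto simp: field_simps)

lemma wt_props:
  assumes m: "m \<ge> 1" and gd: "good s"
  shows "0 \<le> wt m s i" "wt m s i \<le> 1"
  using qq_props[OF m gd] unfolding wt_def by auto

lemma good_step:
  assumes m: "m \<ge> 1" and gd: "good s"
  shows "good (stepf m s b)"
proof -
  have "0 \<le> snd s i + of_bool b * wt m s i \<and> snd s i + of_bool b * wt m s i \<le> fst s i + wt m s i" for i
  proof -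
    have a: "0 \<le> snd s i" "snd s i \<le> fst s i" using gd by (auto simp: good_def)
    have w: "0 \<le> wt m s i" "wt m s i \<le> 1" using wt_props[OF m gd] by auto
    have o: "0 \<le> of_bool b * wt m s i" "of_bool b * wt m s i \<le> wt m s i" using w by auto
    show ?thesis using a o by linarith
  qed
  thus ?thesis by (simp add: good_def stepf_def)
qed

lemma st_snoc: "st m (bs @ [b]) = stepf m (st m bs) b"
  by (simp add: st_def)

lemma good_st: "m \<ge> 1 \<Longrightarrow> good (st m bs)"
proof (induction bs rule: rev_induct)
  case Nil thus ?case by (simp add: st_def good_def)
next
  case (snoc b bs) thus ?case by (simp add: st_snoc good_step)
qed

lemma st_sums:
  "fst (st m bs) i = (\<Sum>t<length bs. wt m (st m (take t bs)) i) \<and>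
   snd (st m bs) i = (\<Sum>t<length bs. of_bool (bs ! t) * wt m (st m (take t bs)) i)"
proof (induction bs rule: rev_induct)
  case Nil thus ?case by (simp add: st_def)
next
  case (snoc b bs)
  have tk: "\<And>t. t < length bs \<Longrightarrow> take t (bs @ [b]) = take t bs" by simp
  have nt: "\<And>t. t < length bs \<Longrightarrow> (bs @ [b]) ! t = bs ! t" by (simp add: nth_append)
  have s1: "(\<Sum>t<length bs. wt m (st m (take t (bs @ [b]))) i) = (\<Sum>t<length bs. wt m (st m (take t bs)) i)"
    by (intro sum.cong) (auto simp: tk)
  have s2: "(\<Sum>t<length bs. of_bool ((bs @ [b]) ! t) * wt m (st m (take t (bs @ [b]))) i)
       = (\<Sum>t<length bs. of_bool (bs ! t) * wt m (st m (take t bs)) i)"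
    by (intro sum.cong) (auto simp: tk nt)
  show ?case using snoc s1 s2 by (simp add: st_snoc stepf_def)
qed

lemma st_W_le: "m \<ge> 1 \<Longrightarrow> fst (st m bs) i \<le> real (length bs)"
proof (induction bs rule: rev_induct)
  case Nil thus ?case by (simp add: st_def)
next
  case (snoc b bs)
  thus ?case using wt_props(2)[OF snoc.prems good_st[OF snoc.prems], of bs i]
    by (simp add: st_snoc stepf_def)
qed

lemma sum_wt:
  assumes m: "m \<ge> 1" and gd: "good s"
  shows "(\<Sum>i\<le>m. wt m s i * f i) = qq m s * f (kk m s) + (1 - qq m s) * f (Suc (kk m s))"
proof -
  have k: "kk m s < m" using kk_props[OF m gd] by simp
  have "(\<Sum>i\<le>m. wt m s i * f i)
      = (\<Sum>i\<le>m. (if i = kk m s then qq m s * f (kk m s) else 0)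
               + (if i = Suc (kk m s) then (1 - qq m s) * f (Suc (kk m s)) else 0))"
    by (intro sum.cong) (auto simp: wt_def)
  also have "\<dots> = qq m s * f (kk m s) + (1 - qq m s) * f (Suc (kk m s))"
    using k by (simp add: sum.distrib)
  finally show ?thesis .
qed

lemma g_inj: "m \<ge> 1 \<Longrightarrow> g m i = g m j \<longleftrightarrow> i = j"
  by (simp add: g_def)

lemma g_Suc: "m \<ge> 1 \<Longrightarrow> g m (Suc k) = g m k + 1 / real m"
  by (simp add: g_def add_divide_distrib)

lemma g_range: "i \<le> m \<Longrightarrow> 0 \<le> g m i \<and> g m i \<le> 1"
  by (cases "m = 0") (auto simp: g_def divide_le_eq_1)

lemma set_FF: "set_pmf (FF m bs) \<subseteq> {g m (kk m (st m bs)), g m (Suc (kk m (st m bs)))}"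
  unfolding FF_def by auto

lemma pmf_FF:
  assumes m: "m \<ge> 1" and i: "i \<le> m"
  shows "pmf (FF m bs) (g m i) = wt m (st m bs) i"
proof -
  define s where "s = st m bs"
  define k where "k = kk m s"
  define f where "f = (\<lambda>c. if c then g m k else g m (Suc k))"
  have gd: "good s" using good_st[OF m] by (simp add: s_def)
  have q: "0 \<le> qq m s" "qq m s \<le> 1" using qq_props[OF m gd] by auto
  have injf: "inj f" unfolding f_def inj_def using g_inj[OF m] by auto
  have FF: "FF m bs = map_pmf f (bernoulli_pmf (qq m s))"
    unfolding FF_def f_def k_def s_def by (rule refl)
  show ?thesis
  proof (cases "i = k")
    case True
    have "pmf (FF m bs) (g m i) = pmf (map_pmf f (bernoulli_pmf (qq m s))) (f True)"
      by (simp add: FF f_def True)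
    also have "\<dots> = qq m s" using q by (simp add: pmf_map_inj'[OF injf])
    finally show ?thesis using True by (simp add: wt_def k_def s_def)
  next
    case False
    show ?thesis
    proof (cases "i = Suc k")
      case True
      have "pmf (FF m bs) (g m i) = pmf (map_pmf f (bernoulli_pmf (qq m s))) (f False)"
        by (simp add: FF f_def True)
      also have "\<dots> = 1 - qq m s" using q by (simp add: pmf_map_inj'[OF injf])
      finally show ?thesis using True by (simp add: wt_def k_def s_def)
    next
      case F2: False
      have "g m i \<notin> set_pmf (FF m bs)" using set_FF[of m bs] g_inj[OF m] False F2
        by (auto simp: k_def s_def)
      hence "pmf (FF m bs) (g m i) = 0" by (simp add: pmf_eq_0_set_pmf)
      thus ?thesis using False F2 by (simp add: wt_def k_def s_def)
    qed
  qed
qed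

lemma pmf_FF0:
  assumes m: "m \<ge> 1" and p: "p \<notin> g m ` {..m}"
  shows "pmf (FF m bs) p = 0"
proof -
  have k: "kk m (st m bs) < m" using kk_props[OF m good_st[OF m]] by simp
  have "p \<notin> set_pmf (FF m bs)" using set_FF[of m bs] p k by auto
  thus ?thesis by (simp add: pmf_eq_0_set_pmf)
qed

lemma valid_FF: "m \<ge> 1 \<Longrightarrow> valid_forecaster (FF m)"
  unfolding valid_forecaster_def
proof (intro allI conjI)
  fix bs assume m: "m \<ge> 1"
  show "finite (set_pmf (FF m bs))" using set_FF[of m bs] by (rule finite_subset) simp
  have k: "kk m (st m bs) < m" using kk_props[OF m good_st[OF m]] by simp
  show "set_pmf (FF m bs) \<subseteq> {0..1}" using set_FF[of m bs] g_range[of "kk m (st m bs)" m]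
    g_range[of "Suc (kk m (st m bs))" m] k by auto
qed

definition Gf :: "nat \<Rightarrow> state \<Rightarrow> real" where
  "Gf m s = (\<Sum>i\<le>m. fst s i * (g m i)\<^sup>2 - 2 * g m i * snd s i + snd s i
                     - V (fst s i) (snd s i) - ln (1 + fst s i))"

lemma Gf_step:
  assumes m: "m \<ge> 1" and gd: "good s"
  shows "Gf m (stepf m s b) \<le> Gf m s + 1 / (4 * (real m)\<^sup>2)"
proof -
  define bb :: real where "bb = of_bool b"
  have bb: "bb = 0 \<or> bb = 1" by (simp add: bb_def)
  have bb2: "bb * bb = bb" using bb by auto
  define D where "D = (\<lambda>i. (g m i - bb)\<^sup>2 - (mu s i - bb)\<^sup>2)"
  have trm: "fst (stepf m s b) i * (g m i)\<^sup>2 - 2 * g m i * snd (stepf m s b) i + snd (stepf m s b) i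
            - V (fst (stepf m s b) i) (snd (stepf m s b) i) - ln (1 + fst (stepf m s b) i)
      \<le> (fst s i * (g m i)\<^sup>2 - 2 * g m i * snd s i + snd s i
                     - V (fst s i) (snd s i) - ln (1 + fst s i)) + wt m s i * D i" for i
  proof -
    define W where "W = fst s i"
    define B where "B = snd s i"
    define w where "w = wt m s i"
    have a: "0 \<le> W" "0 \<le> B" "B \<le> W" using gd unfolding good_def W_def B_def by (meson order_trans)+
    have w: "0 \<le> w" "w \<le> 1" using wt_props[OF m gd] by (auto simp: w_def)
    have ft: "w * ((B + 1/2) / (W + 1) - bb)\<^sup>2
       \<le> V (W + w) (B + bb * w) - V W B + ln (1 + (W + w)) - ln (1 + W)"
      by (rule ftrl_step[OF a w bb])
    have mu: "mu s i = (B + 1/2) / (W + 1)" by (simp add: mu_def W_def B_def)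
    have e: "w * (g m i)\<^sup>2 - 2 * g m i * (bb * w) + bb * w = w * (g m i - bb)\<^sup>2"
      using bb by (auto simp: power2_eq_square algebra_simps)
    have ns: "fst (stepf m s b) i = W + w" "snd (stepf m s b) i = B + bb * w"
      by (simp_all add: stepf_def W_def B_def w_def bb_def)
    show ?thesis unfolding ns D_def mu
      using ft e unfolding W_def[symmetric] B_def[symmetric] w_def[symmetric]
      by (simp add: algebra_simps)
  qed
  have "Gf m (stepf m s b) \<le> Gf m s + (\<Sum>i\<le>m. wt m s i * D i)"
    unfolding Gf_def sum.distrib[symmetric] by (intro sum_mono trm)
  also have "(\<Sum>i\<le>m. wt m s i * D i) = qq m s * D (kk m s) + (1 - qq m s) * D (Suc (kk m s))"
    by (rule sum_wt[OF m gd])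
  also have "\<dots> \<le> 1 / (4 * (real m)\<^sup>2)"
  proof -
    define k where "k = kk m s"
    have kp: "dd m s k < 0" "0 \<le> dd m s (Suc k)" using kk_props[OF m gd] by (auto simp: k_def)
    have hm: "(1::real) / real m > 0" using m by simp
    have gS: "g m (Suc k) = g m k + 1 / real m" by (rule g_Suc[OF m])
    note H = hedge[OF hm, of "g m k" "mu s k" "mu s (Suc k)" bb]
    have qeq: "qq m s = (g m k + 1 / real m - mu s (Suc k)) /
         (g m k + 1 / real m - mu s (Suc k) - (g m k - mu s k))"
      by (simp add: qq_def k_def[symmetric] dd_def gS)
    have d1: "g m k - mu s k < 0" using kp by (simp add: dd_def)
    have d2: "0 \<le> g m k + 1 / real m - mu s (Suc k)" using kp by (simp add: dd_def gS)
    note H2 = H[OF d1 d2, folded qeq]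
    have "qq m s * D k + (1 - qq m s) * D (Suc k)
        = (qq m s * (g m k - bb)\<^sup>2 + (1 - qq m s) * (g m k + 1 / real m - bb)\<^sup>2)
          - (qq m s * (mu s k - bb)\<^sup>2 + (1 - qq m s) * (mu s (Suc k) - bb)\<^sup>2)"
      by (simp add: D_def gS right_diff_distrib)
    also have "\<dots> \<le> (1 / real m)\<^sup>2 / 4" using H2 by linarith
    also have "\<dots> = 1 / (4 * (real m)\<^sup>2)" by (simp add: power_divide)
    finally show ?thesis by (simp add: k_def)
  qed
  finally show ?thesis by simp
qed

lemma Gf_st: "m \<ge> 1 \<Longrightarrow> Gf m (st m bs) \<le> real (length bs) / (4 * (real m)\<^sup>2)"
proof (induction bs rule: rev_induct)
  case Nil thus ?case by (simp add: st_def Gf_def V_00)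
next
  case (snoc b bs)
  have "Gf m (st m (bs @ [b])) \<le> Gf m (st m bs) + 1 / (4 * (real m)\<^sup>2)"
    unfolding st_snoc by (rule Gf_step[OF snoc.prems good_st[OF snoc.prems]])
  also have "\<dots> \<le> real (length bs) / (4 * (real m)\<^sup>2) + 1 / (4 * (real m)\<^sup>2)"
    using snoc by simp
  also have "\<dots> = real (length (bs @ [b])) / (4 * (real m)\<^sup>2)" by (simp add: add_divide_distrib)
  finally show ?case .
qed

lemma run_props:
  "length (fst (run F A n)) = n \<and> length (snd (run F A n)) = n \<and>
   (\<forall>t<n. fst (run F A n) ! t = F (take t (snd (run F A n))))"
proof (induction n)
  case 0 thus ?case by simp
next
  case (Suc n)
  obtain xs bs where r: "run F A n = (xs, bs)" by (cases "run F A n")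
  have IH: "length xs = n" "length bs = n" "\<forall>t<n. xs ! t = F (take t bs)"
    using Suc r by auto
  show ?case using IH by (auto simp: r Let_def nth_append less_Suc_eq)
qed

lemma cal_bound:
  assumes m: "m \<ge> 1" and len: "length xs = n" "length bs = n"
    and xs: "\<forall>t<n. xs ! t = FF m (take t bs)"
  shows "cal xs bs \<le> real n / (4 * (real m)\<^sup>2) + (real m + 1) * (1/4 + ln (1 + real n))"
proof -
  define s where "s = st m bs"
  have gd: "good s" using good_st[OF m] by (simp add: s_def)
  have Wg: "Wt xs (g m i) = fst s i" if "i \<le> m" for i
  proof -
    have "Wt xs (g m i) = (\<Sum>t<n. wt m (st m (take t bs)) i)"
      unfolding Wt_def len using xs pmf_FF[OF m that] by (intro sum.cong) auto
    thus ?thesis using st_sums[of m bs i] len by (simp add: s_def)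
  qed
  have Bg: "Bt xs bs (g m i) = snd s i" if "i \<le> m" for i
  proof -
    have "Bt xs bs (g m i) = (\<Sum>t<n. of_bool (bs ! t) * wt m (st m (take t bs)) i)"
      unfolding Bt_def len using xs pmf_FF[OF m that] by (intro sum.cong) auto
    thus ?thesis using st_sums[of m bs i] len by (simp add: s_def)
  qed
  have W0: "Wt xs p = 0" if "p \<notin> g m ` {..m}" for p
    unfolding Wt_def len using xs pmf_FF0[OF m that] by simp
  define I where "I = {i \<in> {..m}. 0 < fst s i}"
  have S: "{p \<in> {0..1}. Wt xs p > 0} = g m ` I"
  proof
    show "{p \<in> {0..1}. Wt xs p > 0} \<subseteq> g m ` I"
    proof
      fix p assume p: "p \<in> {p \<in> {0..1}. Wt xs p > 0}"
      hence "p \<in> g m ` {..m}" using W0 by force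
      then obtain i where i: "i \<le> m" "p = g m i" by auto
      thus "p \<in> g m ` I" using p Wg[OF i(1)] by (auto simp: I_def)
    qed
    show "g m ` I \<subseteq> {p \<in> {0..1}. Wt xs p > 0}"
      using g_range Wg by (auto simp: I_def)
  qed
  have inj: "inj_on (g m) I" using g_inj[OF m] by (auto simp: inj_on_def)
  define h where "h = (\<lambda>i. if 0 < fst s i then fst s i * (g m i - snd s i / fst s i)\<^sup>2 else 0)"
  define G where "G = (\<lambda>i. fst s i * (g m i)\<^sup>2 - 2 * g m i * snd s i + snd s i
                     - V (fst s i) (snd s i) - ln (1 + fst s i))"
  have "cal xs bs = (\<Sum>p\<in>g m ` I. Wt xs p * (p - Bt xs bs p / Wt xs p)\<^sup>2)"
    unfolding cal_def S ..
  also have "\<dots> = (\<Sum>i\<in>I. Wt xs (g m i) * (g m i - Bt xs bs (g m i) / Wt xs (g m i))\<^sup>2)"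
    by (rule sum.reindex[OF inj, unfolded comp_def])
  also have "\<dots> = (\<Sum>i\<in>I. fst s i * (g m i - snd s i / fst s i)\<^sup>2)"
    by (intro sum.cong) (auto simp: I_def Wg Bg)
  also have "\<dots> = (\<Sum>i\<le>m. h i)"
    unfolding I_def h_def by (rule sum.inter_filter) simp
  also have "\<dots> \<le> (\<Sum>i\<le>m. G i + (1/4 + ln (1 + real n)))"
  proof (intro sum_mono)
    fix i assume "i \<in> {..m}"
    have a: "0 \<le> snd s i" "snd s i \<le> fst s i" using gd by (auto simp: good_def)
    have Wn: "fst s i \<le> real n" using st_W_le[OF m, of bs i] len by (simp add: s_def)
    have lnn: "ln (1 + fst s i) \<le> ln (1 + real n)" using a Wn by simp
    show "h i \<le> G i + (1/4 + ln (1 + real n))"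
    proof (cases "0 < fst s i")
      case True
      define W where "W = fst s i"
      define B where "B = snd s i"
      have Wp: "W > 0" using True by (simp add: W_def)
      have e: "W * (g m i - B / W)\<^sup>2 = W * (g m i)\<^sup>2 - 2 * g m i * B + B\<^sup>2 / W"
        using Wp by (simp add: field_simps power2_eq_square)
      have Vl: "V W B \<le> 1/4 + B - B\<^sup>2 / W" using V_le[OF Wp] a by (simp add: W_def B_def)
      have hi: "h i = W * (g m i - B / W)\<^sup>2" using True by (simp add: h_def W_def B_def)
      have Gi: "G i = W * (g m i)\<^sup>2 - 2 * g m i * B + B - V W B - ln (1 + W)"
        by (simp add: G_def W_def B_def)
      have lnW: "ln (1 + W) \<le> ln (1 + real n)" using lnn by (simp add: W_def)
      show ?thesis unfolding hi Gi e using Vl lnW by linarith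
    next
      case False
      hence z: "fst s i = 0" "snd s i = 0" using a by linarith+
      have "0 \<le> ln (1 + real n)" by simp
      thus ?thesis unfolding h_def G_def using z by (simp add: V_00)
    qed
  qed
  also have "\<dots> = Gf m s + (real m + 1) * (1/4 + ln (1 + real n))"
    by (simp add: sum.distrib Gf_def G_def)
  also have "\<dots> \<le> real n / (4 * (real m)\<^sup>2) + (real m + 1) * (1/4 + ln (1 + real n))"
    using Gf_st[OF m, of bs] len by (simp add: s_def)
  finally show ?thesis .
qed

lemma final_arith:
  fixes T :: nat
  assumes T: "T \<ge> 2"
  defines "c \<equiv> real T powr (1/3)"
  defines "m \<equiv> nat \<lceil>c\<rceil>"
  shows "m \<ge> 1 \<and> real T / (4 * (real m)\<^sup>2) + (real m + 1) * (1/4 + ln (1 + real T))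
           \<le> 10 * real T powr (1/3) * ln (real T)"
proof -
  have T1: "real T \<ge> 2" using T by simp
  have c1: "c \<ge> 1" unfolding c_def using T1 by (intro ge_one_powr_ge_zero) auto
  have mc: "real m \<ge> c" unfolding m_def using c1 by (simp add: le_of_int_ceiling)
  have mc2: "real m \<le> c + 1" unfolding m_def using c1
    by (simp add: of_int_ceiling_le_add_one)
  have m1: "m \<ge> 1" using mc c1 by linarith
  have c3: "c * c * c = real T"
  proof -
    have "c * c * c = real T powr (1/3 + 1/3 + 1/3)" unfolding c_def powr_add by (rule refl)
    also have "\<dots> = real T" using T1 by simp
    finally show ?thesis .
  qed
  have lnT: "ln (real T) \<ge> 1/2"
  proof -
    have "ln (1 / real T) \<le> 1 / real T - 1" using T1 by (intro ln_le_minus_one) auto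
    moreover have "ln (1 / real T) = - ln (real T)" using T1 by (simp add: ln_div)
    moreover have "1 / real T \<le> 1/2" using T1 by simp
    ultimately show ?thesis by linarith
  qed
  have ln1: "ln (1 + real T) \<le> 2 * ln (real T)"
  proof -
    have "2 * real T \<le> real T * real T" using T1 by (intro mult_right_mono) auto
    hence "1 + real T \<le> real T * real T" using T1 by linarith
    hence "ln (1 + real T) \<le> ln (real T * real T)" using T1 by simp
    also have "\<dots> = 2 * ln (real T)" using T1 by (simp add: ln_mult)
    finally show ?thesis .
  qed
  have X: "1/4 + ln (1 + real T) \<le> 3 * ln (real T)" using lnT ln1 by linarith
  have X0: "0 \<le> 1/4 + ln (1 + real T)" using T1 by simp
  have p1: "(real m + 1) * (1/4 + ln (1 + real T)) \<le> (3 * c) * (3 * ln (real T))"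
    using mc2 c1 X X0 by (intro mult_mono) auto
  have p2: "real T / (4 * (real m)\<^sup>2) \<le> c / 4"
  proof -
    have "real T / (4 * (real m)\<^sup>2) \<le> real T / (4 * c\<^sup>2)"
      using mc c1 by (intro divide_left_mono mult_left_mono power_mono) auto
    also have "\<dots> = c / 4" using c1 by (simp add: c3[symmetric] power2_eq_square field_simps)
    finally show ?thesis .
  qed
  have p3: "c * (1/4) \<le> c * ln (real T)" using c1 lnT by (intro mult_left_mono) auto
  have "real T / (4 * (real m)\<^sup>2) + (real m + 1) * (1/4 + ln (1 + real T)) \<le> 10 * c * ln (real T)"
    using p1 p2 p3 by (simp add: algebra_simps)
  thus ?thesis using m1 by (simp add: c_def)
qed

theorem theorem4:
  "\<exists>C::real. \<forall>T::nat. T \<ge> 2 \<longrightarrow>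
     (\<exists>F. valid_forecaster F \<and>
        (\<forall>A::adversary. cal (fst (run F A T)) (snd (run F A T))
                          \<le> C * real T powr (1/3) * ln (real T)))"
proof -
  have main: "\<exists>F. valid_forecaster F \<and>
        (\<forall>A::adversary. cal (fst (run F A T)) (snd (run F A T))
                          \<le> 10 * real T powr (1/3) * ln (real T))" if T: "T \<ge> 2" for T :: nat
  proof -
    define m where "m = nat \<lceil>real T powr (1/3)\<rceil>"
    have fa: "m \<ge> 1 \<and> real T / (4 * (real m)\<^sup>2) + (real m + 1) * (1/4 + ln (1 + real T))
             \<le> 10 * real T powr (1/3) * ln (real T)"
      using final_arith[OF T] by (simp add: m_def)
    have m: "m \<ge> 1" using fa by simp
    have v: "valid_forecaster (FF m)" by (rule valid_FF[OF m])
    have c: "cal (fst (run (FF m) A T)) (snd (run (FF m) A T)) \<le> 10 * real T powr (1/3) * ln (real T)"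
      for A :: adversary
    proof -
      have rp: "length (fst (run (FF m) A T)) = T" "length (snd (run (FF m) A T)) = T"
        "\<forall>t<T. fst (run (FF m) A T) ! t = FF m (take t (snd (run (FF m) A T)))"
        using run_props[of "FF m" A T] by auto
      have "cal (fst (run (FF m) A T)) (snd (run (FF m) A T))
          \<le> real T / (4 * (real m)\<^sup>2) + (real m + 1) * (1/4 + ln (1 + real T))"
        by (rule cal_bound[OF m rp])
      thus ?thesis using fa by linarith
    qed
    show ?thesis using v c by blast
  qed
  show ?thesis using main by blast
qed

end
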